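(* Fix $e\in -\mathrm{int}(C)$ and let $A\in\mathcal P^0_{\mp C}(Y)$ be $\mp C$-compact. Then: (i) the map $D\mapsto w_e(D,A)$ is strictly $s$-decreasing on the family of $\mp C$-compact sets in $\mathcal P^0_{\mp C}(Y)$; (ii) the map $D\mapsto w_e(A,D)$ is strictly $s$-increasing on the family of $\mp C$-compact sets in $\mathcal P^0_{\mp C}(Y)$.
   Context: $Y$ is a real topological linear space and $C\subset Y$ is a convex, closed, pointed cone with nonempty interior $\mathrm{int}(C)$. $\mathbb R^2$ is ordered by $\mathbb R^2_+$: $a<_{\mathbb R^2_+}b$ iff $b-a\in\mathrm{int}(\mathbb R^2_+)$. $\mathcal P^0_{\mp C}(Y)$ is the family of nonempty $A\subset Y$ with $A+C\neq Y$ and $A-C\neq Y$. $A$ is $C$-compact if every cover of $A$ by sets of the form $U_\alpha+C$ with $U_\alpha$ open admits a finite subcover; $A$ is $\mp C$-compact if it is $C$-compact and $-C$-compact. Strict set relations: $A\prec^\ell B$ iff $B\subset A+\mathrm{int}(C)$; $A\prec^u B$ iff $A\subset B-\mathrm{int}(C)$; $A\prec^s B$ iff $A\prec^\ell B$ and $A\prec^u B$. For $e\in-\mathrm{int}(C)$: $\phi_{e,A}(y)=\inf\{t\in\mathbb R: y\in te+A+C\}$; $G^\ell_e(A,B)=\sup_{b\in B}\phi_{e,A}(b)$; $G^u_e(B,A):=-G^\ell_e(-B,-A)$; $w_e(A,B)=\big(-G^\ell_e(A,B),\,G^u_e(B,A)\big)$. A map $T$ is strictly $s$-increasing (resp. strictly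 $s$-decreasing) on a family $\mathcal A$ if $A,B\in\mathcal A$ and $A\prec^s B$ imply $T(A)<_{\mathbb R^2_+}T(B)$ (resp. $T(B)<_{\mathbb R^2_+}T(A)$). *)

theory Defs
  imports "HOL-Analysis.Analysis"
begin

definition msum :: "'a::real_vector set \<Rightarrow> 'a set \<Rightarrow> 'a set" (infixl "\<oplus>\<^sub>s" 65) where
  "A \<oplus>\<^sub>s B = {a + b | a b. a \<in> A \<and> b \<in> B}"

definition mdiff :: "'a::real_vector set \<Rightarrow> 'a set \<Rightarrow> 'a set" (infixl "\<ominus>\<^sub>s" 65) where
  "A \<ominus>\<^sub>s B = {a - b | a b. a \<in> A \<and> b \<in> B}"

definition topological_linear_space :: "'a::{real_vector,topological_space} itself \<Rightarrow> bool" where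
  "topological_linear_space TYPE('a) \<longleftrightarrow>
     continuous_on UNIV (\<lambda>p::'a \<times> 'a. fst p + snd p) \<and>
     continuous_on UNIV (\<lambda>p::real \<times> 'a. fst p *\<^sub>R snd p)"

definition is_cone :: "'a::real_vector set \<Rightarrow> bool" where
  "is_cone C \<longleftrightarrow> (\<forall>x\<in>C. \<forall>t::real. t \<ge> 0 \<longrightarrow> t *\<^sub>R x \<in> C)"

definition pointed :: "'a::real_vector set \<Rightarrow> bool" where
  "pointed C \<longleftrightarrow> C \<inter> uminus ` C = {0}"

definition P0 :: "'a::real_vector set \<Rightarrow> 'a set \<Rightarrow> bool" where
  "P0 C A \<longleftrightarrow> A \<noteq> {} \<and> A \<oplus>\<^sub>s C \<noteq> UNIV \<and> A \<ominus>\<^sub>s C \<noteq> UNIV"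

definition K_compact :: "'a::{real_vector,topological_space} set \<Rightarrow> 'a set \<Rightarrow> bool" where
  "K_compact K A \<longleftrightarrow>
     (\<forall>\<U>. (\<forall>U\<in>\<U>. open U) \<and> A \<subseteq> (\<Union>U\<in>\<U>. U \<oplus>\<^sub>s K) \<longrightarrow>
        (\<exists>\<F>\<subseteq>\<U>. finite \<F> \<and> A \<subseteq> (\<Union>U\<in>\<F>. U \<oplus>\<^sub>s K)))"

definition pm_compact :: "'a::{real_vector,topological_space} set \<Rightarrow> 'a set \<Rightarrow> bool" where
  "pm_compact C A \<longleftrightarrow> K_compact C A \<and> K_compact (uminus ` C) A"

definition lt_l :: "'a::{real_vector,topological_space} set \<Rightarrow> 'a set \<Rightarrow> 'a set \<Rightarrow> bool" where
  "lt_l C A B \<longleftrightarrow> B \<subseteq> A \<oplus>\<^sub>s interior C"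

definition lt_u :: "'a::{real_vector,topological_space} set \<Rightarrow> 'a set \<Rightarrow> 'a set \<Rightarrow> bool" where
  "lt_u C A B \<longleftrightarrow> A \<subseteq> B \<ominus>\<^sub>s interior C"

definition lt_s :: "'a::{real_vector,topological_space} set \<Rightarrow> 'a set \<Rightarrow> 'a set \<Rightarrow> bool" where
  "lt_s C A B \<longleftrightarrow> lt_l C A B \<and> lt_u C A B"

text \<open>Scalarizing functional phi_{e,A} (extended-real valued; inf of empty set is +infinity).\<close>
definition phi :: "'a::real_vector set \<Rightarrow> 'a \<Rightarrow> 'a set \<Rightarrow> 'a \<Rightarrow> ereal" where
  "phi C e A y = Inf {ereal t | t. y \<in> ({t *\<^sub>R e} \<oplus>\<^sub>s A) \<oplus>\<^sub>s C}"

definition Gl :: "'a::real_vector set \<Rightarrow> 'a \<Rightarrow> 'a set \<Rightarrow> 'a set \<Rightarrow> ereal" where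
  "Gl C e A B = (SUP b\<in>B. phi C e A b)"

definition Gu :: "'a::real_vector set \<Rightarrow> 'a \<Rightarrow> 'a set \<Rightarrow> 'a set \<Rightarrow> ereal" where
  "Gu C e B A = - Gl C e (uminus ` B) (uminus ` A)"

definition w :: "'a::real_vector set \<Rightarrow> 'a \<Rightarrow> 'a set \<Rightarrow> 'a set \<Rightarrow> ereal \<times> ereal" where
  "w C e A B = (- Gl C e A B, Gu C e B A)"

definition lt2 :: "ereal \<times> ereal \<Rightarrow> ereal \<times> ereal \<Rightarrow> bool" where
  "lt2 a b \<longleftrightarrow> fst a < fst b \<and> snd a < snd b"

definition strictly_s_increasing ::
  "'a::{real_vector,topological_space} set \<Rightarrow> ('a set \<Rightarrow> bool) \<Rightarrow> ('a set \<Rightarrow> ereal \<times> ereal) \<Rightarrow> bool" where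
  "strictly_s_increasing C \<A> T \<longleftrightarrow> (\<forall>A B. \<A> A \<and> \<A> B \<and> lt_s C A B \<longrightarrow> lt2 (T A) (T B))"

definition strictly_s_decreasing ::
  "'a::{real_vector,topological_space} set \<Rightarrow> ('a set \<Rightarrow> bool) \<Rightarrow> ('a set \<Rightarrow> ereal \<times> ereal) \<Rightarrow> bool" where
  "strictly_s_decreasing C \<A> T \<longleftrightarrow> (\<forall>A B. \<A> A \<and> \<A> B \<and> lt_s C A B \<longrightarrow> lt2 (T B) (T A))"

end

theory Submission
  imports Defs
begin

locale setting =
  fixes C :: "'a::{real_vector,topological_space} set" and e :: 'a
  assumes tls: "topological_linear_space TYPE('a)"
    and cvx: "convex C" and cone: "is_cone C" and zC: "0 \<in> C"
    and me: "-e \<in> interior C"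
begin

lemma cont_add_c: "continuous_on UNIV (\<lambda>x::'a. x + v)"
proof -
  have a: "continuous_on UNIV (\<lambda>p::'a \<times> 'a. fst p + snd p)" using tls unfolding topological_linear_space_def by blast
  have "continuous_on UNIV (\<lambda>x::'a. (x, v))" by (intro continuous_on_Pair continuous_on_id continuous_on_const)
  from continuous_on_compose2[OF a this] show ?thesis by simp
qed

lemma cont_scale_c: "continuous_on UNIV (\<lambda>x::'a. r *\<^sub>R x)"
proof -
  have a: "continuous_on UNIV (\<lambda>p::real \<times> 'a. fst p *\<^sub>R snd p)" using tls unfolding topological_linear_space_def by blast
  have "continuous_on UNIV (\<lambda>x::'a. (r, x))" by (intro continuous_on_Pair continuous_on_id continuous_on_const)
  from continuous_on_compose2[OF a this] show ?thesis by simp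
qed

lemma cont_line: "continuous_on UNIV (\<lambda>s::real. (k::'a) + s *\<^sub>R u)"
proof -
  have a: "continuous_on UNIV (\<lambda>p::real \<times> 'a. fst p *\<^sub>R snd p)" using tls unfolding topological_linear_space_def by blast
  have "continuous_on UNIV (\<lambda>s::real. (s, u))" by (intro continuous_on_Pair continuous_on_id continuous_on_const)
  from continuous_on_compose2[OF a this] have "continuous_on UNIV (\<lambda>s::real. s *\<^sub>R u)" by simp
  from continuous_on_compose2[OF cont_add_c[of k] this] show ?thesis by (simp add: add.commute)
qed

lemma open_vim: "continuous_on UNIV f \<Longrightarrow> open S \<Longrightarrow> open (f -` S)"
  using continuous_on_open_vimage[of UNIV f] by auto

lemma open_translate: "open (S::'a set) \<Longrightarrow> open ((\<lambda>x. v + x) ` S)"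
proof -
  assume "open S"
  have "(\<lambda>x. v + x) ` S = (\<lambda>x. x + (-v)) -` S" by (auto simp: image_iff) (metis add.commute diff_add_cancel)
  then show ?thesis using open_vim[OF cont_add_c \<open>open S\<close>, of "-v"] by simp
qed

lemma open_scale: "r \<noteq> 0 \<Longrightarrow> open (S::'a set) \<Longrightarrow> open ((\<lambda>x. r *\<^sub>R x) ` S)"
proof -
  assume r: "r \<noteq> 0" and "open S"
  have "(\<lambda>x. r *\<^sub>R x) ` S = (\<lambda>x. (1/r) *\<^sub>R x) -` S"
    using r by (auto simp: image_iff) (metis r divide_self_if scaleR_one scaleR_scaleR times_divide_eq_left mult.commute)
  then show ?thesis using open_vim[OF cont_scale_c \<open>open S\<close>] by simp
qed

lemma open_neg: "open (S::'a set) \<Longrightarrow> open (uminus ` S)"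
proof -
  assume "open S"
  have "uminus ` S = (\<lambda>x. (-1::real) *\<^sub>R x) ` S" by simp
  then show ?thesis using open_scale[of "-1" S] \<open>open S\<close> by simp
qed

lemma CC: "c1 \<in> C \<Longrightarrow> c2 \<in> C \<Longrightarrow> c1 + c2 \<in> C"
proof -
  assume a: "c1 \<in> C" "c2 \<in> C"
  have "(1/2) *\<^sub>R c1 + (1/2) *\<^sub>R c2 \<in> C" using cvx a unfolding convex_def by auto
  then have "2 *\<^sub>R ((1/2) *\<^sub>R c1 + (1/2) *\<^sub>R c2) \<in> C" using cone unfolding is_cone_def by auto
  then show ?thesis by (simp add: scaleR_add_right)
qed

lemma CiC: "c \<in> C \<Longrightarrow> k \<in> interior C \<Longrightarrow> c + k \<in> interior C"
proof -
  assume c: "c \<in> C" and k: "k \<in> interior C"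
  have o: "open ((\<lambda>x. c + x) ` interior C)" by (rule open_translate) simp
  have "(\<lambda>x. c + x) ` interior C \<subseteq> C" using c CC interior_subset by blast
  from interior_maximal[OF this o] k show ?thesis by blast
qed

lemma iC: "k \<in> interior C \<Longrightarrow> k \<in> C" using interior_subset by blast

lemma scale_int: "r > 0 \<Longrightarrow> k \<in> interior C \<Longrightarrow> r *\<^sub>R k \<in> interior C"
proof -
  assume r: "r > 0" and k: "k \<in> interior C"
  have o: "open ((\<lambda>x. r *\<^sub>R x) ` interior C)" using r by (intro open_scale) auto
  have "(\<lambda>x. r *\<^sub>R x) ` interior C \<subseteq> C" using r cone interior_subset unfolding is_cone_def by fastforce
  from interior_maximal[OF this o] k show ?thesis by blast
qed

lemma small: assumes "k \<in> interior C" shows "\<exists>d>0. \<forall>s. \<bar>s\<bar> < d \<longrightarrow> k + s *\<^sub>R (u::'a) \<in> interior C"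
proof -
  have "isCont (\<lambda>s::real. k + s *\<^sub>R u) 0" using cont_line[of k u] continuous_on_eq_continuous_at[of UNIV] by auto
  then obtain S where S: "open S" "0 \<in> S" "\<forall>x'\<in>S. k + x' *\<^sub>R u \<in> interior C"
    using assms unfolding continuous_at_open by (metis open_interior scale_zero_left add_0_right)
  then obtain d where "d > 0" "\<forall>y. dist y 0 < d \<longrightarrow> y \<in> S" unfolding open_dist by blast
  then show ?thesis using S by (metis dist_real_def diff_zero)
qed

lemma large: "\<exists>T. \<forall>r\<ge>T. (u::'a) + r *\<^sub>R (-e) \<in> interior C"
proof -
  obtain d where d: "d > 0" "\<forall>s. \<bar>s\<bar> < d \<longrightarrow> -e + s *\<^sub>R u \<in> interior C" using small[OF me] by blast
  show ?thesis
  proof (intro exI allI impI)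
    fix r assume r: "r \<ge> 2/d"
    have rp: "r > 0" using r d by (smt (verit) divide_pos_pos)
    have "\<bar>1/r\<bar> < d" using r d rp by (simp add: field_simps)
    then have "-e + (1/r) *\<^sub>R u \<in> interior C" using d by blast
    from scale_int[OF rp this] have "r *\<^sub>R (-e + (1/r) *\<^sub>R u) \<in> interior C" .
    moreover have "r *\<^sub>R (-e + (1/r) *\<^sub>R u) = u + r *\<^sub>R (-e)" using rp by (simp add: scaleR_add_right scaleR_diff_right)
    ultimately show "u + r *\<^sub>R (-e) \<in> interior C" by simp
  qed
qed


definition V :: "real \<Rightarrow> 'a set \<Rightarrow> 'a set" where
  "V t X = {t *\<^sub>R e + x + k | x k. x \<in> X \<and> k \<in> interior C}"

lemma mem_pc: "y \<in> ({t *\<^sub>R e} \<oplus>\<^sub>s X) \<oplus>\<^sub>s K \<longleftrightarrow> (\<exists>x\<in>X. \<exists>k\<in>K. y = t *\<^sub>R e + x + k)"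
  unfolding msum_def by auto

lemma phi_le: "x \<in> X \<Longrightarrow> c \<in> C \<Longrightarrow> phi C e X (t *\<^sub>R e + x + c) \<le> ereal t"
  unfolding phi_def by (rule Inf_lower) (auto simp: mem_pc)

lemma phi_lt: assumes "phi C e X y < ereal t" shows "\<exists>x\<in>X. \<exists>k\<in>interior C. y = t *\<^sub>R e + x + k"
proof -
  obtain t' where t': "t' < t" "y \<in> ({t' *\<^sub>R e} \<oplus>\<^sub>s X) \<oplus>\<^sub>s C"
    using assms unfolding phi_def Inf_less_iff by auto
  then obtain x c where xc: "x \<in> X" "c \<in> C" "y = t' *\<^sub>R e + x + c" by (auto simp: mem_pc)
  have "(t - t') *\<^sub>R (-e) \<in> interior C" using scale_int[OF _ me] t' by simp
  then have k: "c + (t - t') *\<^sub>R (-e) \<in> interior C" using CiC xc by blast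
  have "y = t *\<^sub>R e + x + (c + (t - t') *\<^sub>R (-e))" using xc by (simp add: algebra_simps)
  then show ?thesis using k xc by blast
qed

lemma Gl_le: "(\<forall>y\<in>Y. \<exists>x\<in>X. \<exists>c\<in>C. y = t *\<^sub>R e + x + c) \<Longrightarrow> Gl C e X Y \<le> ereal t"
  unfolding Gl_def by (rule SUP_least) (auto intro: phi_le)

lemma Gl_lt: "Gl C e X Y < ereal t \<Longrightarrow> y \<in> Y \<Longrightarrow> \<exists>x\<in>X. \<exists>k\<in>interior C. y = t *\<^sub>R e + x + k"
proof -
  assume a: "Gl C e X Y < ereal t" "y \<in> Y"
  have "phi C e X y \<le> Gl C e X Y" unfolding Gl_def using a(2) by (rule SUP_upper)
  then show ?thesis using a phi_lt by (meson le_less_trans)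
qed

lemma V_open: "open (V t X)"
proof -
  have "V t X = (\<Union>x\<in>X. (\<lambda>k. (t *\<^sub>R e + x) + k) ` interior C)" unfolding V_def by auto
  then show ?thesis by (auto intro!: open_UN open_translate)
qed

lemma V_C: "V t X \<oplus>\<^sub>s C \<subseteq> V t X"
proof
  fix y assume "y \<in> V t X \<oplus>\<^sub>s C"
  then obtain x k c where "x \<in> X" "k \<in> interior C" "c \<in> C" "y = t *\<^sub>R e + x + k + c"
    unfolding msum_def V_def by auto
  then show "y \<in> V t X" unfolding V_def using CiC[of c k]
    by (auto simp: add.assoc add.commute) (metis add.assoc add.commute)
qed

lemma V_mono: "t \<le> t' \<Longrightarrow> V t X \<subseteq> V t' X"
proof
  fix y assume tt: "t \<le> t'" and "y \<in> V t X"
  then obtain x k where xk: "x \<in> X" "k \<in> interior C" "y = t *\<^sub>R e + x + k" unfolding V_def by auto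
  have "-e \<in> C" using me iC by blast
  then have "(t' - t) *\<^sub>R (-e) \<in> C" using cone tt unfolding is_cone_def by (meson diff_ge_0_iff_ge)
  then have "(t' - t) *\<^sub>R (-e) + k \<in> interior C" using CiC xk by blast
  moreover have "y = t' *\<^sub>R e + x + ((t' - t) *\<^sub>R (-e) + k)" using xk by (simp add: algebra_simps)
  ultimately show "y \<in> V t' X" using xk unfolding V_def by blast
qed

lemma kc_seq:
  fixes W :: "nat \<Rightarrow> 'a set"
  assumes kc: "K_compact C Y" and o: "\<And>n. open (W n)" and wc: "\<And>n. W n \<oplus>\<^sub>s C \<subseteq> W n"
    and mo: "\<And>m n. m \<le> n \<Longrightarrow> W m \<subseteq> W n" and cov: "Y \<subseteq> (\<Union>n. W n)"
  shows "\<exists>N. Y \<subseteq> W N"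
proof -
  have sub: "W n \<subseteq> W n \<oplus>\<^sub>s C" for n unfolding msum_def using zC by force
  have "Y \<subseteq> (\<Union>U\<in>range W. U \<oplus>\<^sub>s C)" using cov sub by blast
  then obtain F where F: "F \<subseteq> range W" "finite F" "Y \<subseteq> (\<Union>U\<in>F. U \<oplus>\<^sub>s C)"
    using kc o unfolding K_compact_def by (metis rangeE)
  then obtain N0 where N0: "finite N0" "F = W ` N0" by (metis finite_subset_image subset_UNIV)
  have "Y \<subseteq> W (Max (insert 0 N0))"
  proof
    fix y assume "y \<in> Y"
    then obtain n where "n \<in> N0" "y \<in> W n \<oplus>\<^sub>s C" using F N0 by auto
    then have "y \<in> W n" using wc by blast
    moreover have "n \<le> Max (insert 0 N0)" using N0 \<open>n \<in> N0\<close> by simp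
    ultimately show "y \<in> W (Max (insert 0 N0))" using mo by blast
  qed
  then show ?thesis by blast
qed


lemma finite_Gl:
  assumes X: "X \<noteq> {}" and XC: "X \<oplus>\<^sub>s C \<noteq> UNIV" and Y: "Y \<noteq> {}" and kc: "K_compact C Y"
  shows "\<exists>s. Gl C e X Y = ereal s"
proof -
  obtain x0 where x0: "x0 \<in> X" using X by blast
  obtain y0 where y0: "y0 \<in> Y" using Y by blast
  obtain z where z: "z \<notin> X \<oplus>\<^sub>s C" using XC by blast
  have cov: "Y \<subseteq> (\<Union>n. V (real n) X)"
  proof
    fix y assume "y \<in> Y"
    obtain T where T: "\<forall>r\<ge>T. (y - x0) + r *\<^sub>R (-e) \<in> interior C" using large by blast
    define n where "n = nat \<lceil>T\<rceil>"
    have "real n \<ge> T" unfolding n_def by linarith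
    then have k: "(y - x0) + real n *\<^sub>R (-e) \<in> interior C" using T by blast
    have "y = real n *\<^sub>R e + x0 + ((y - x0) + real n *\<^sub>R (-e))" by simp
    then have "y \<in> V (real n) X" unfolding V_def using k x0 by blast
    then show "y \<in> (\<Union>n. V (real n) X)" by blast
  qed
  obtain N where N: "Y \<subseteq> V (real N) X"
    using kc_seq[OF kc V_open V_C V_mono cov] by auto
  have up: "Gl C e X Y \<le> ereal (real N)"
  proof (rule Gl_le, intro ballI)
    fix y assume "y \<in> Y"
    then obtain x k where "x \<in> X" "k \<in> interior C" "y = real N *\<^sub>R e + x + k" using N unfolding V_def by blast
    then show "\<exists>x\<in>X. \<exists>c\<in>C. y = real N *\<^sub>R e + x + c" using iC by blast
  qed
  obtain T where T: "\<forall>r\<ge>T. (z - y0) + r *\<^sub>R (-e) \<in> interior C" using large by blast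
  have "ereal (-T) \<le> phi C e X y0" unfolding phi_def
  proof (rule Inf_greatest)
    fix u assume "u \<in> {ereal t |t. y0 \<in> ({t *\<^sub>R e} \<oplus>\<^sub>s X) \<oplus>\<^sub>s C}"
    then obtain t x c where u: "u = ereal t" "x \<in> X" "c \<in> C" "y0 = t *\<^sub>R e + x + c" by (auto simp: mem_pc)
    show "ereal (-T) \<le> u"
    proof (rule ccontr)
      assume "\<not> ereal (-T) \<le> u"
      then have "-t \<ge> T" using u by auto
      then have "(z - y0) + (-t) *\<^sub>R (-e) \<in> C" using T iC by blast
      then have "c + ((z - y0) + (-t) *\<^sub>R (-e)) \<in> C" using CC u by blast
      moreover have "z = x + (c + ((z - y0) + (-t) *\<^sub>R (-e)))" using u by (simp add: algebra_simps)
      ultimately have "z \<in> X \<oplus>\<^sub>s C" using u unfolding msum_def by blast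
      then show False using z by blast
    qed
  qed
  moreover have "phi C e X y0 \<le> Gl C e X Y" unfolding Gl_def using y0 by (rule SUP_upper)
  ultimately have lo: "ereal (-T) \<le> Gl C e X Y" by order
  show ?thesis using up lo by (cases "Gl C e X Y") auto
qed

lemma gap:
  assumes sub: "Y \<subseteq> X \<oplus>\<^sub>s interior C" and kc: "K_compact C Y"
  shows "\<exists>\<epsilon>>0. \<forall>y\<in>Y. \<exists>x\<in>X. \<exists>k\<in>interior C. y = (-\<epsilon>) *\<^sub>R e + x + k"
proof -
  define W where "W n = V (- inverse (real (Suc n))) X" for n
  have mo: "W m \<subseteq> W n" if "m \<le> n" for m n
    unfolding W_def by (rule V_mono) (use that in \<open>simp add: le_imp_inverse_le\<close>)
  have cov: "Y \<subseteq> (\<Union>n. W n)"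
  proof
    fix y assume "y \<in> Y"
    then obtain x k where xk: "x \<in> X" "k \<in> interior C" "y = x + k" using sub unfolding msum_def by auto
    obtain d where d: "d > 0" "\<forall>s. \<bar>s\<bar> < d \<longrightarrow> k + s *\<^sub>R e \<in> interior C" using small[OF xk(2)] by blast
    obtain n where n: "inverse (real (Suc n)) < d" using reals_Archimedean[OF d(1)] by blast
    have "k + inverse (real (Suc n)) *\<^sub>R e \<in> interior C" using d n by auto
    moreover have "y = (- inverse (real (Suc n))) *\<^sub>R e + x + (k + inverse (real (Suc n)) *\<^sub>R e)"
      using xk by simp
    ultimately have "y \<in> W n" unfolding W_def V_def using xk by blast
    then show "y \<in> (\<Union>n. W n)" by blast
  qed
  obtain N where N: "Y \<subseteq> W N"
    using kc_seq[OF kc, of W] V_open V_C mo cov unfolding W_def by blast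
  show ?thesis
  proof (rule exI[of _ "inverse (real (Suc N))"], intro conjI ballI)
    fix y assume "y \<in> Y"
    then show "\<exists>x\<in>X. \<exists>k\<in>interior C. y = (- inverse (real (Suc N))) *\<^sub>R e + x + k"
      using N unfolding W_def V_def by blast
  qed simp
qed

lemma P1:
  assumes sub: "Y \<subseteq> X \<oplus>\<^sub>s interior C" and kc: "K_compact C Y" and s: "Gl C e A X = ereal s"
  shows "Gl C e A Y < Gl C e A X"
proof -
  obtain \<epsilon> where ep: "\<epsilon> > 0" "\<forall>y\<in>Y. \<exists>x\<in>X. \<exists>k\<in>interior C. y = (-\<epsilon>) *\<^sub>R e + x + k"
    using gap[OF sub kc] by blast
  have "Gl C e A Y \<le> ereal (s - \<epsilon>/2)"
  proof (rule Gl_le, intro ballI)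
    fix y assume "y \<in> Y"
    then obtain x k1 where xk: "x \<in> X" "k1 \<in> interior C" "y = (-\<epsilon>) *\<^sub>R e + x + k1" using ep by blast
    have "Gl C e A X < ereal (s + \<epsilon>/2)" using s ep by simp
    then obtain a k2 where ak: "a \<in> A" "k2 \<in> interior C" "x = (s + \<epsilon>/2) *\<^sub>R e + a + k2"
      using Gl_lt xk(1) by blast
    have "k1 + k2 \<in> C" using CC iC xk ak by blast
    have id: "(-\<epsilon>) *\<^sub>R e + (s + \<epsilon>/2) *\<^sub>R e = (s - \<epsilon>/2) *\<^sub>R e"
      by (simp only: scaleR_left_distrib[symmetric]) (simp add: algebra_simps)
    have "y = ((-\<epsilon>) *\<^sub>R e + (s + \<epsilon>/2) *\<^sub>R e) + a + (k1 + k2)" using xk ak by (simp only: add_ac)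
    moreover note \<open>k1 + k2 \<in> C\<close>
    ultimately have "y = (s - \<epsilon>/2) *\<^sub>R e + a + (k1 + k2)" "k1 + k2 \<in> C" by (simp_all only: id)
    then show "\<exists>a\<in>A. \<exists>c\<in>C. y = (s - \<epsilon>/2) *\<^sub>R e + a + c" using ak by blast
  qed
  also have "\<dots> < Gl C e A X" using s ep by simp
  finally show ?thesis .
qed

lemma P2:
  assumes sub: "Y \<subseteq> X \<oplus>\<^sub>s interior C" and kc: "K_compact C Y" and s: "Gl C e Y A = ereal s"
  shows "Gl C e X A < Gl C e Y A"
proof -
  obtain \<epsilon> where ep: "\<epsilon> > 0" "\<forall>y\<in>Y. \<exists>x\<in>X. \<exists>k\<in>interior C. y = (-\<epsilon>) *\<^sub>R e + x + k"
    using gap[OF sub kc] by blast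
  have "Gl C e X A \<le> ereal (s - \<epsilon>/2)"
  proof (rule Gl_le, intro ballI)
    fix a assume "a \<in> A"
    have "Gl C e Y A < ereal (s + \<epsilon>/2)" using s ep by simp
    then obtain y k2 where yk: "y \<in> Y" "k2 \<in> interior C" "a = (s + \<epsilon>/2) *\<^sub>R e + y + k2"
      using Gl_lt \<open>a \<in> A\<close> by blast
    then obtain x k1 where xk: "x \<in> X" "k1 \<in> interior C" "y = (-\<epsilon>) *\<^sub>R e + x + k1" using ep by blast
    have "k1 + k2 \<in> C" using CC iC xk yk by blast
    have id: "(-\<epsilon>) *\<^sub>R e + (s + \<epsilon>/2) *\<^sub>R e = (s - \<epsilon>/2) *\<^sub>R e"
      by (simp only: scaleR_left_distrib[symmetric]) (simp add: algebra_simps)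
    have "a = ((-\<epsilon>) *\<^sub>R e + (s + \<epsilon>/2) *\<^sub>R e) + x + (k1 + k2)" using xk yk by (simp only: add_ac)
    moreover note \<open>k1 + k2 \<in> C\<close>
    ultimately have "a = (s - \<epsilon>/2) *\<^sub>R e + x + (k1 + k2)" "k1 + k2 \<in> C" by (simp_all only: id)
    then show "\<exists>x\<in>X. \<exists>c\<in>C. a = (s - \<epsilon>/2) *\<^sub>R e + x + c" using xk by blast
  qed
  also have "\<dots> < Gl C e Y A" using s ep by simp
  finally show ?thesis .
qed


lemma neg_kc: assumes "K_compact (uminus ` C) D" shows "K_compact C (uminus ` D)"
  unfolding K_compact_def
proof (intro allI impI)
  fix \<U> :: "'a set set" assume a: "(\<forall>U\<in>\<U>. open U) \<and> uminus ` D \<subseteq> (\<Union>U\<in>\<U>. U \<oplus>\<^sub>s C)"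
  let ?U = "(\<lambda>U. uminus ` U) ` \<U>"
  have "(\<forall>U\<in>?U. open U)"
  proof
    fix V assume "V \<in> ?U"
    then obtain U where "U \<in> \<U>" "V = uminus ` U" by blast
    then show "open V" using a open_neg by simp
  qed
  moreover have "D \<subseteq> (\<Union>U\<in>?U. U \<oplus>\<^sub>s uminus ` C)"
  proof
    fix d assume "d \<in> D"
    then have "-d \<in> (\<Union>U\<in>\<U>. U \<oplus>\<^sub>s C)" using a by blast
    then obtain U where U: "U \<in> \<U>" "-d \<in> U \<oplus>\<^sub>s C" by blast
    then obtain u c where uc: "u \<in> U" "c \<in> C" "-d = u + c" unfolding msum_def by blast
    have "d = - (- d)" by simp
    also have "\<dots> = - (u + c)" using uc(3) by simp
    finally have "d = - (u + c)" .
    then have "d = (-u) + (-c)" by simp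
    moreover have "-u \<in> uminus ` U" "-c \<in> uminus ` C" using uc by auto
    ultimately have "d \<in> uminus ` U \<oplus>\<^sub>s uminus ` C" unfolding msum_def by blast
    moreover have "uminus ` U \<in> ?U" using U by blast
    ultimately show "d \<in> (\<Union>U\<in>?U. U \<oplus>\<^sub>s uminus ` C)" by (rule UN_I[rotated])
  qed
  ultimately have "\<exists>F\<subseteq>?U. finite F \<and> D \<subseteq> (\<Union>U\<in>F. U \<oplus>\<^sub>s uminus ` C)"
    by (intro assms[unfolded K_compact_def, rule_format] conjI)
  then obtain F where F: "F \<subseteq> ?U" "finite F" "D \<subseteq> (\<Union>U\<in>F. U \<oplus>\<^sub>s uminus ` C)"
    by blast
  then obtain G where G: "G \<subseteq> \<U>" "finite G" "F = (\<lambda>U. uminus ` U) ` G" by (meson finite_subset_image)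
  have "uminus ` D \<subseteq> (\<Union>U\<in>G. U \<oplus>\<^sub>s C)"
  proof
    fix y assume "y \<in> uminus ` D"
    then obtain d where d: "d \<in> D" "y = -d" by blast
    then obtain V where V: "V \<in> F" "d \<in> V \<oplus>\<^sub>s uminus ` C" using F(3) by blast
    then obtain U where U: "U \<in> G" "V = uminus ` U" using G(3) by blast
    obtain v c' where vc: "v \<in> V" "c' \<in> uminus ` C" "d = v + c'" using V(2) unfolding msum_def by blast
    obtain u where u: "u \<in> U" "v = -u" using vc(1) U(2) by blast
    obtain c where c: "c \<in> C" "c' = -c" using vc(2) by blast
    have "y = u + c" using d vc u c by simp
    then have "y \<in> U \<oplus>\<^sub>s C" unfolding msum_def using u c by blast
    then show "y \<in> (\<Union>U\<in>G. U \<oplus>\<^sub>s C)" using U(1) by (rule UN_I[rotated])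
  qed
  then show "\<exists>\<F>\<subseteq>\<U>. finite \<F> \<and> uminus ` D \<subseteq> (\<Union>U\<in>\<F>. U \<oplus>\<^sub>s C)" using G by blast
qed

lemma neg_P0: assumes "P0 C D" shows "uminus ` D \<noteq> {}" "uminus ` D \<oplus>\<^sub>s C \<noteq> UNIV"
proof -
  show "uminus ` D \<noteq> {}" using assms unfolding P0_def by blast
  show "uminus ` D \<oplus>\<^sub>s C \<noteq> UNIV"
  proof
    assume u: "uminus ` D \<oplus>\<^sub>s C = UNIV"
    have "D \<ominus>\<^sub>s C = UNIV"
    proof (rule set_eqI, simp)
      fix y
      have "-y \<in> uminus ` D \<oplus>\<^sub>s C" using u by simp
      then obtain d c where "d \<in> D" "c \<in> C" "-y = -d + c" unfolding msum_def by blast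
      then have "- (-y) = - (-d + c)" by simp
      then have "y = - (-d + c)" by simp
      then have "y = d - c" by simp
      then show "y \<in> D \<ominus>\<^sub>s C" unfolding mdiff_def using \<open>d \<in> D\<close> \<open>c \<in> C\<close> by blast
    qed
    then show False using assms unfolding P0_def by blast
  qed
qed

lemma neg_lt: assumes "D \<subseteq> B \<ominus>\<^sub>s K" shows "uminus ` D \<subseteq> uminus ` B \<oplus>\<^sub>s K"
proof
  fix y assume "y \<in> uminus ` D"
  then obtain d where d: "d \<in> D" "y = -d" by blast
  then obtain b k where bk: "b \<in> B" "k \<in> K" "d = b - k" using assms unfolding mdiff_def by blast
  then have "y = -b + k" using d by simp
  then show "y \<in> uminus ` B \<oplus>\<^sub>s K" unfolding msum_def using bk by blast
qed

end

theorem theorem2: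
  fixes C :: "'a::{real_vector,topological_space} set" and e :: 'a and A :: "'a set"
  assumes "topological_linear_space TYPE('a)"
    and "convex C" and "closed C" and "is_cone C" and "pointed C" and "interior C \<noteq> {}"
    and "e \<in> uminus ` interior C"
    and "P0 C A" and "pm_compact C A"
  shows "strictly_s_decreasing C (\<lambda>D. P0 C D \<and> pm_compact C D) (\<lambda>D. w C e D A)
       \<and> strictly_s_increasing C (\<lambda>D. P0 C D \<and> pm_compact C D) (\<lambda>D. w C e A D)"
proof -
  have z: "0 \<in> C" using assms(5) unfolding pointed_def by blast
  have me: "-e \<in> interior C" using assms(7) by auto
  interpret S: setting C e using assms(1,2,4) z me by unfold_locales
  have main: "lt2 (w C e B A) (w C e D A) \<and> lt2 (w C e A D) (w C e A B)"
    if D: "P0 C D" "pm_compact C D" and B: "P0 C B" "pm_compact C B" and lt: "lt_s C D B" for D B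
  proof -
    have sub1: "B \<subseteq> D \<oplus>\<^sub>s interior C" using lt unfolding lt_s_def lt_l_def by blast
    have sub2: "uminus ` D \<subseteq> uminus ` B \<oplus>\<^sub>s interior C" using lt S.neg_lt unfolding lt_s_def lt_u_def by blast
    have kA: "K_compact C A" and kmA: "K_compact C (uminus ` A)"
      using assms(9) S.neg_kc unfolding pm_compact_def by auto
    have kB: "K_compact C B" and kmB: "K_compact C (uminus ` B)"
      using B S.neg_kc unfolding pm_compact_def by auto
    have kD: "K_compact C D" and kmD: "K_compact C (uminus ` D)"
      using D S.neg_kc unfolding pm_compact_def by auto
    have ne: "A \<noteq> {}" "A \<oplus>\<^sub>s C \<noteq> UNIV" "B \<noteq> {}" "B \<oplus>\<^sub>s C \<noteq> UNIV" "D \<noteq> {}" "D \<oplus>\<^sub>s C \<noteq> UNIV"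
      using assms(8) B D unfolding P0_def by auto
    note mA = S.neg_P0[OF assms(8)] and mB = S.neg_P0[OF B(1)] and mD = S.neg_P0[OF D(1)]
    obtain s1 where s1: "Gl C e B A = ereal s1" using S.finite_Gl[OF ne(3,4) ne(1) kA] by blast
    obtain s2 where s2: "Gl C e (uminus ` A) (uminus ` B) = ereal s2" using S.finite_Gl[OF mA mB(1) kmB] by blast
    obtain s3 where s3: "Gl C e A D = ereal s3" using S.finite_Gl[OF ne(1,2) ne(5) kD] by blast
    obtain s4 where s4: "Gl C e (uminus ` D) (uminus ` A) = ereal s4" using S.finite_Gl[OF mD mA(1) kmA] by blast
    have i1: "Gl C e D A < Gl C e B A" by (rule S.P2[OF sub1 kB s1])
    have i2: "Gl C e (uminus ` A) (uminus ` D) < Gl C e (uminus ` A) (uminus ` B)" by (rule S.P1[OF sub2 kmD s2])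
    have i3: "Gl C e A B < Gl C e A D" by (rule S.P1[OF sub1 kB s3])
    have i4: "Gl C e (uminus ` B) (uminus ` A) < Gl C e (uminus ` D) (uminus ` A)" by (rule S.P2[OF sub2 kmD s4])
    show ?thesis unfolding lt2_def w_def Gu_def fst_conv snd_conv ereal_minus_less_minus using i1 i2 i3 i4 by blast
  qed
  show ?thesis unfolding strictly_s_decreasing_def strictly_s_increasing_def
    by (intro conjI allI impI; elim conjE; use main in blast)
qed

end
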